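(* Consider the following setting. Let $x_1,\ldots,x_n$ be points of a set $\mathcal X$, $g:\mathcal X\to\mathbb R$, and $Y_i=g(x_i)+\varepsilon_i$, $i=1,\ldots,n$, with $(\varepsilon_i)$ i.i.d. real random variables. Let $\rho:\mathbb R\to[0,\infty)$ be convex with $\rho(0)=0$, and for $U\subset\mathcal X$ let $m(Y_i,\,x_i\in U)$ be a selected minimizer over $\mu\in\mathbb R$ of $\sum_{i:x_i\in U}\rho(Y_i-\mu)$. Assume the following monotonicity property (Assumption M): for any set $S$ and any partition $S=\bigcup_jS_j$ into pairwise disjoint sets $S_j$, and any realisation of the data, $\min_j m(Y_i,\,x_i\in S_j)\le m(Y_i,\,x_i\in S)\le\max_j m(Y_i,\,x_i\in S_j)$. Let $U_0\subset U_1\subset\cdots\subset U_K$ be nested subsets of $\mathcal X$, $\tilde\theta_k:=m(Y_i,\,x_i\in U_k)$ and $\tilde\theta_{(k+1)\setminus k}:=m(Y_i,\,x_i\in U_{k+1}\setminus U_k)$. Fix $r\ge1$ and define $s_j$, $s_{kj}$, the critical values $z_0,\ldots,z_{K-1}>0$, $z_K:=1$, the selected index $\hat k$ and $\hat\theta:=\tilde\theta_{\hat k}$ as in the context. Then for every $k=0,\ldots,K-1$ and every realisation of the data, \[\big|\hat\theta-\tilde\theta_k\big|\,\mathbf 1(\hat k>k)\le\max_{j=k+1,\ldots,K-1}\big(z_ks_{jk}+z_{j+1}s_{j+1}\big).\]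
   Context: $\mathbb E_0$ denotes expectation under the model with $g\equiv0$ (i.e. $Y_i=\varepsilon_i$), and the stochastic error levels are $s_j:=\mathbb E_0[|\tilde\theta_j|^r]^{1/r}$ and $s_{kj}:=\mathbb E_0[|\tilde\theta_{(k+1)\setminus k}-\tilde\theta_j|^r]^{1/r}$ for $0\le j\le k\le K-1$ (assumed finite). Given critical values $z_0,\ldots,z_{K-1}>0$ and $z_K:=1$, the selected index is \[\hat k:=\inf\Big\{k\in\{0,\ldots,K-1\}\,\Big|\,\exists j\le k:\ |\tilde\theta_{(k+1)\setminus k}-\tilde\theta_j|>z_js_{kj}+z_{k+1}s_{k+1}\Big\}\wedge K\] (with $\inf\emptyset=\infty$), i.e. $k$ is increased sequentially from $0$ as long as all these tests are passed. *)

theory Defs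
  imports "HOL-Probability.Probability"
begin

definition loc_obj :: "nat \<Rightarrow> (nat \<Rightarrow> 'x) \<Rightarrow> (real \<Rightarrow> real) \<Rightarrow> (nat \<Rightarrow> real) \<Rightarrow> 'x set \<Rightarrow> real \<Rightarrow> real" where
  "loc_obj n x \<rho> Y U \<mu> = (\<Sum>i\<in>{i. i \<in> {1..n} \<and> x i \<in> U}. \<rho> (Y i - \<mu>))"

definition is_selected_minimizer :: "nat \<Rightarrow> (nat \<Rightarrow> 'x) \<Rightarrow> (real \<Rightarrow> real) \<Rightarrow> ((nat \<Rightarrow> real) \<Rightarrow> 'x set \<Rightarrow> real) \<Rightarrow> bool" where
  "is_selected_minimizer n x \<rho> m \<longleftrightarrow>
     (\<forall>Y U \<mu>. loc_obj n x \<rho> Y U (m Y U) \<le> loc_obj n x \<rho> Y U \<mu>)"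

definition assumption_M :: "((nat \<Rightarrow> real) \<Rightarrow> 'x set \<Rightarrow> real) \<Rightarrow> (nat \<Rightarrow> real) \<Rightarrow> bool" where
  "assumption_M m Y \<longleftrightarrow>
     (\<forall>(J::nat set) (P::nat \<Rightarrow> 'x set). finite J \<longrightarrow> J \<noteq> {} \<longrightarrow> disjoint_family_on P J \<longrightarrow>
        (MIN j\<in>J. m Y (P j)) \<le> m Y (\<Union>j\<in>J. P j) \<and> m Y (\<Union>j\<in>J. P j) \<le> (MAX j\<in>J. m Y (P j)))"

definition Lr_level :: "'w measure \<Rightarrow> real \<Rightarrow> ('w \<Rightarrow> real) \<Rightarrow> real" where
  "Lr_level M r f = (integral\<^sup>L M (\<lambda>\<omega>. \<bar>f \<omega>\<bar> powr r)) powr (1 / r)"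

text \<open>Selected index khat: the first k in {0..K-1} at which some test with j \<le> k rejects,
  or K if no test rejects. thd k stands for theta~_{(k+1)\k}, th j for theta~_j.\<close>
definition rejects_at :: "(nat \<Rightarrow> real) \<Rightarrow> (nat \<Rightarrow> real) \<Rightarrow> (nat \<Rightarrow> real) \<Rightarrow> (nat \<Rightarrow> real)
    \<Rightarrow> (nat \<Rightarrow> nat \<Rightarrow> real) \<Rightarrow> nat \<Rightarrow> bool" where
  "rejects_at th thd z s skj k \<longleftrightarrow>
     (\<exists>j\<le>k. \<bar>thd k - th j\<bar> > z j * skj k j + z (k + 1) * s (k + 1))"

definition khat :: "nat \<Rightarrow> (nat \<Rightarrow> real) \<Rightarrow> (nat \<Rightarrow> real) \<Rightarrow> (nat \<Rightarrow> real) \<Rightarrow> (nat \<Rightarrow> real)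
    \<Rightarrow> (nat \<Rightarrow> nat \<Rightarrow> real) \<Rightarrow> nat" where
  "khat K th thd z s skj =
     (if \<exists>k<K. rejects_at th thd z s skj k
      then (LEAST k. k < K \<and> rejects_at th thd z s skj k) else K)"

end

theory Submission
  imports Defs
begin


lemma U_mono_aux:
  fixes U :: "nat \<Rightarrow> 'x set"
  assumes "\<And>j. j < K \<Longrightarrow> U j \<subseteq> U (j + 1)" "a \<le> b" "b \<le> K"
  shows "U a \<subseteq> U b"
  using assms(2,3)
proof (induction b)
  case 0 then show ?case by simp
next
  case (Suc b)
  show ?case
  proof (cases "a = Suc b")
    case True then show ?thesis by simp
  next
    case False
    then have "U a \<subseteq> U b" using Suc by simp
    also have "\<dots> \<subseteq> U (Suc b)" using assms(1)[of b] Suc by simp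
    finally show ?thesis .
  qed
qed

lemma union_parts:
  fixes U :: "nat \<Rightarrow> 'x set"
  assumes "\<And>j. j < K \<Longrightarrow> U j \<subseteq> U (j + 1)" "k + d \<le> K"
  shows "(\<Union>i\<in>{0..d}. (if i = 0 then U k else U (k+i) - U (k+i-1))) = U (k + d)"
  using assms(2)
proof (induction d)
  case 0 then show ?case by simp
next
  case (Suc d)
  have "{0..Suc d} = insert (Suc d) {0..d}" by auto
  then have "(\<Union>i\<in>{0..Suc d}. (if i = 0 then U k else U (k+i) - U (k+i-1)))
      = (U (k + Suc d) - U (k + d)) \<union> U (k + d)" using Suc by auto
  also have "\<dots> = U (k + Suc d)" using assms(1)[of "k+d"] Suc by auto
  finally show ?case .
qed

lemma disj_parts:
  fixes U :: "nat \<Rightarrow> 'x set"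
  assumes "\<And>j. j < K \<Longrightarrow> U j \<subseteq> U (j + 1)" "k + d \<le> K"
  shows "disjoint_family_on (\<lambda>i. if i = 0 then U k else U (k+i) - U (k+i-1)) {0..d}"
  unfolding disjoint_family_on_def
proof (intro ballI impI)
  fix a b assume ab: "a \<in> {0..d}" "b \<in> {0..d}" "a \<noteq> b"
  have key: "(if a = 0 then U k else U (k+a) - U (k+a-1)) \<inter> (if b = 0 then U k else U (k+b) - U (k+b-1)) = {}"
    if "a < b" "b \<le> d" for a b
  proof -
    have "U (k+a) \<subseteq> U (k+b-1)" using U_mono_aux[where K=K and U=U, OF assms(1), of "k+a" "k+b-1"] that assms(2) by simp
    moreover have "U k \<subseteq> U (k+a)" using U_mono_aux[where K=K and U=U, OF assms(1), of k "k+a"] that assms(2) by simp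
    ultimately show ?thesis using that by auto
  qed
  show "(if a = 0 then U k else U (k+a) - U (k+a-1)) \<inter> (if b = 0 then U k else U (k+b) - U (k+b-1)) = {}"
  proof (cases "a < b")
    case True then show ?thesis using key ab by auto
  next
    case False then have "b < a" using ab by simp
    then show ?thesis using key[of b a] ab by auto
  qed
qed

lemma Lr_nonneg: "Lr_level M r f \<ge> 0"
  unfolding Lr_level_def by simp

theorem proposition3p4:
  fixes M :: "'w measure"
    and n K k :: nat
    and x :: "nat \<Rightarrow> 'x"
    and g :: "'x \<Rightarrow> real"
    and \<epsilon> :: "nat \<Rightarrow> 'w \<Rightarrow> real"
    and \<rho> :: "real \<Rightarrow> real"
    and m :: "(nat \<Rightarrow> real) \<Rightarrow> 'x set \<Rightarrow> real"
    and U :: "nat \<Rightarrow> 'x set"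
    and z :: "nat \<Rightarrow> real"
    and r :: real
    and \<omega> :: 'w
  defines "s \<equiv> (\<lambda>j. Lr_level M r (\<lambda>\<omega>'. m (\<lambda>i. \<epsilon> i \<omega>') (U j)))"
    and "skj \<equiv> (\<lambda>k' j. Lr_level M r (\<lambda>\<omega>'. m (\<lambda>i. \<epsilon> i \<omega>') (U (k' + 1) - U k') - m (\<lambda>i. \<epsilon> i \<omega>') (U j)))"
    and "th \<equiv> (\<lambda>j. m (\<lambda>i. g (x i) + \<epsilon> i \<omega>) (U j))"
    and "thd \<equiv> (\<lambda>k'. m (\<lambda>i. g (x i) + \<epsilon> i \<omega>) (U (k' + 1) - U k'))"
  assumes "prob_space M"
    and "\<And>i. i \<in> {1..n} \<Longrightarrow> \<epsilon> i \<in> borel_measurable M"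
    and "prob_space.indep_vars M (\<lambda>_. borel) \<epsilon> {1..n}"
    and "\<And>i. i \<in> {1..n} \<Longrightarrow> distr M borel (\<epsilon> i) = distr M borel (\<epsilon> 1)"
    and "convex_on UNIV \<rho>" and "\<And>t. \<rho> t \<ge> 0" and "\<rho> 0 = 0"
    and "is_selected_minimizer n x \<rho> m"
    and "\<And>\<omega>'. \<omega>' \<in> space M \<Longrightarrow> assumption_M m (\<lambda>i. g (x i) + \<epsilon> i \<omega>')"
    and "\<And>j. j < K \<Longrightarrow> U j \<subseteq> U (j + 1)"
    and "r \<ge> 1"
    and "\<And>j. j \<le> K \<Longrightarrow> integrable M (\<lambda>\<omega>'. \<bar>m (\<lambda>i. \<epsilon> i \<omega>') (U j)\<bar> powr r)"
    and "\<And>k' j. j \<le> k' \<Longrightarrow> k' < K \<Longrightarrow>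
           integrable M (\<lambda>\<omega>'. \<bar>m (\<lambda>i. \<epsilon> i \<omega>') (U (k' + 1) - U k') - m (\<lambda>i. \<epsilon> i \<omega>') (U j)\<bar> powr r)"
    and "\<And>j. j < K \<Longrightarrow> z j > 0"
    and "z K = 1"
    and "k < K"
    and "\<omega> \<in> space M"
  shows "\<bar>th (khat K th thd z s skj) - th k\<bar> * of_bool (khat K th thd z s skj > k)
           \<le> (MAX j\<in>{k..<K}. z k * skj j k + z (j + 1) * s (j + 1))"
proof -
  define h where "h = khat K th thd z s skj"
  define B where "B = (MAX j\<in>{k..<K}. z k * skj j k + z (j + 1) * s (j + 1))"
  have zpos: "z j \<ge> 0" if "j \<le> K" for j
    using assms(18)[of j] assms(19) that by (cases "j = K") auto
  have Bge: "z k * skj j k + z (j + 1) * s (j + 1) \<le> B" if "k \<le> j" "j < K" for j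
    unfolding B_def using that by (intro Max_ge) auto
  have term_nonneg: "z k * skj j k + z (j + 1) * s (j + 1) \<ge> 0" if "j < K" for j
  proof -
    have "skj j k \<ge> 0" "s (j+1) \<ge> 0" unfolding skj_def s_def by (auto intro: Lr_nonneg)
    moreover have "z k \<ge> 0" "z (j+1) \<ge> 0" using zpos assms(20) that by auto
    ultimately show ?thesis by simp
  qed
  have B0: "B \<ge> 0" using Bge[of k] term_nonneg[of k] assms(20) by simp
  have hK: "h \<le> K"
    unfolding h_def khat_def
    by (auto intro: less_imp_le Least_le[THEN order.trans])
  have norej: "\<not> rejects_at th thd z s skj j" if "j < h" for j
  proof (cases "\<exists>k<K. rejects_at th thd z s skj k")
    case True
    then have "h = (LEAST k. k < K \<and> rejects_at th thd z s skj k)" unfolding h_def khat_def by simp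
    then have "\<not> (j < K \<and> rejects_at th thd z s skj j)" using not_less_Least that by blast
    moreover have "j < K" using that hK by simp
    ultimately show ?thesis by simp
  next
    case False
    then show ?thesis using that hK by auto
  qed
  show ?thesis
  proof (cases "k < h")
    case False then show ?thesis unfolding h_def[symmetric] B_def[symmetric] using B0 by simp
  next
    case True
    define d where "d = h - k"
    have kd: "k + d = h" "k + d \<le> K" using True hK unfolding d_def by auto
    define P where "P = (\<lambda>i. if i = 0 then U k else U (k+i) - U (k+i-1))"
    define Y where "Y = (\<lambda>i. g (x i) + \<epsilon> i \<omega>)"
    have un: "(\<Union>i\<in>{0..d}. P i) = U h" unfolding P_def using union_parts[where K=K and U=U, OF assms(14) kd(2)] kd by simp
    have dj: "disjoint_family_on P {0..d}" unfolding P_def using disj_parts[where K=K and U=U, OF assms(14) kd(2)] .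
    have AM: "assumption_M m Y" unfolding Y_def using assms(13)[OF assms(21)] .
    have mm: "(MIN i\<in>{0..d}. m Y (P i)) \<le> m Y (U h) \<and> m Y (U h) \<le> (MAX i\<in>{0..d}. m Y (P i))"
    proof -
      have "finite {0..d}" "{0..d} \<noteq> {}" by auto
      then show ?thesis using AM dj unfolding assumption_M_def un[symmetric] by (metis (no_types, lifting))
    qed
    have close: "\<bar>m Y (P i) - th k\<bar> \<le> B" if "i \<in> {0..d}" for i
    proof (cases "i = 0")
      case True then show ?thesis using B0 unfolding P_def th_def Y_def by simp
    next
      case False
      define j where "j = k + i - 1"
      have j: "k \<le> j" "j < h" "j + 1 = k + i" using False that kd unfolding j_def by auto
      have "k + i - 1 = j" using j by simp
      then have "P i = U (j+1) - U j" unfolding P_def using False j(3) by (simp del: One_nat_def)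
      then have eq: "m Y (P i) = thd j" unfolding thd_def Y_def by simp
      have "\<bar>thd j - th k\<bar> \<le> z k * skj j k + z (j + 1) * s (j + 1)"
        using norej[OF j(2)] j(1) unfolding rejects_at_def by (meson not_less)
      also have "\<dots> \<le> B" using Bge[of j] j(1,2) hK by linarith
      finally show ?thesis using eq by simp
    qed
    obtain i1 where i1: "i1 \<in> {0..d}" "(MIN i\<in>{0..d}. m Y (P i)) = m Y (P i1)"
      using Min_in[of "(\<lambda>i. m Y (P i)) ` {0..d}"] by (metis (no_types, lifting) atLeastAtMost_iff empty_iff finite_atLeastAtMost finite_imageI image_empty image_iff le0 order_refl)
    obtain i2 where i2: "i2 \<in> {0..d}" "(MAX i\<in>{0..d}. m Y (P i)) = m Y (P i2)"
      using Max_in[of "(\<lambda>i. m Y (P i)) ` {0..d}"] by (metis (no_types, lifting) atLeastAtMost_iff empty_iff finite_atLeastAtMost finite_imageI image_empty image_iff le0 order_refl)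
    have "\<bar>th h - th k\<bar> \<le> B"
    proof -
      have "th h = m Y (U h)" unfolding th_def Y_def by simp
      then show ?thesis using mm close[OF i1(1)] close[OF i2(1)] i1(2) i2(2) by linarith
    qed
    then show ?thesis using True unfolding h_def[symmetric] B_def[symmetric] by simp
  qed
qed

end
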